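(* Let $G$ and $H$ be finite simple graphs with disjoint vertex sets, of orders $n_1$ and $n_2$ respectively, and let $u$ be a vertex of $G$. Then \[\mathrm{dp}_{G\vee H}(u)=x^{n_2}\,\mathrm{dp}_G(u)+x^{n_1}\,\mathrm{dp}(H).\]
   Context: For a vertex $v$ of a simple graph $\Gamma$, the degree polynomial $\mathrm{dp}_\Gamma(v)\in\mathbb{Z}[x]$ is the polynomial in which the coefficient of $x^{i}$ is the number of neighbors of $v$ in $\Gamma$ having degree $i$ in $\Gamma$ ($\mathrm{dp}_\Gamma(v)=0$ if $v$ is isolated). The degree polynomial of the graph $\Gamma$ is $\mathrm{dp}(\Gamma)=\sum_{i\ge 0} t_i x^i$, where $t_i$ is the number of vertices of $\Gamma$ of degree $i$ (so $t_0$ counts isolated vertices). The join $G\vee H$ is the simple graph on $V(G)\cup V(H)$ whose edges are the edges of $G$, the edges of $H$, and all pairs $\{a,b\}$ with $a\in V(G)$, $b\in V(H)$. *)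

theory Defs
  imports "HOL-Computational_Algebra.Polynomial"
begin

definition simple_graph :: "'a set \<Rightarrow> ('a \<Rightarrow> 'a \<Rightarrow> bool) \<Rightarrow> bool" where
  "simple_graph V E \<longleftrightarrow> finite V \<and> (\<forall>x y. E x y \<longrightarrow> x \<in> V \<and> y \<in> V)
     \<and> (\<forall>x y. E x y \<longrightarrow> E y x) \<and> (\<forall>x. \<not> E x x)"

definition neighbors :: "'a set \<Rightarrow> ('a \<Rightarrow> 'a \<Rightarrow> bool) \<Rightarrow> 'a \<Rightarrow> 'a set" where
  "neighbors V E v = {w \<in> V. E v w}"

definition degree_in :: "'a set \<Rightarrow> ('a \<Rightarrow> 'a \<Rightarrow> bool) \<Rightarrow> 'a \<Rightarrow> nat" where
  "degree_in V E v = card (neighbors V E v)"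

definition dp_vertex :: "'a set \<Rightarrow> ('a \<Rightarrow> 'a \<Rightarrow> bool) \<Rightarrow> 'a \<Rightarrow> int poly" where
  "dp_vertex V E v = (\<Sum>w\<in>neighbors V E v. monom 1 (degree_in V E w))"

definition dp_graph :: "'a set \<Rightarrow> ('a \<Rightarrow> 'a \<Rightarrow> bool) \<Rightarrow> int poly" where
  "dp_graph V E = (\<Sum>v\<in>V. monom 1 (degree_in V E v))"

text \<open>Edge relation of the join G v H (vertex set VG \<union> VH).\<close>
definition join_edges :: "'a set \<Rightarrow> ('a \<Rightarrow> 'a \<Rightarrow> bool) \<Rightarrow> 'a set \<Rightarrow> ('a \<Rightarrow> 'a \<Rightarrow> bool)
    \<Rightarrow> 'a \<Rightarrow> 'a \<Rightarrow> bool" where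
  "join_edges VG EG VH EH a b \<longleftrightarrow> EG a b \<or> EH a b \<or> (a \<in> VG \<and> b \<in> VH) \<or> (a \<in> VH \<and> b \<in> VG)"

end

theory Submission
  imports Defs
begin

lemma nbG:
  assumes "simple_graph VG EG" and "simple_graph VH EH"
    and "VG \<inter> VH = {}" and "w \<in> VG"
  shows "neighbors (VG \<union> VH) (join_edges VG EG VH EH) w = neighbors VG EG w \<union> VH"
  using assms unfolding neighbors_def join_edges_def simple_graph_def by blast

lemma nbH:
  assumes "simple_graph VG EG" and "simple_graph VH EH"
    and "VG \<inter> VH = {}" and "w \<in> VH"
  shows "neighbors (VG \<union> VH) (join_edges VG EG VH EH) w = neighbors VH EH w \<union> VG"
  using assms unfolding neighbors_def join_edges_def simple_graph_def by blast

lemma degG: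
  assumes "simple_graph VG EG" and "simple_graph VH EH"
    and "VG \<inter> VH = {}" and "w \<in> VG"
  shows "degree_in (VG \<union> VH) (join_edges VG EG VH EH) w = degree_in VG EG w + card VH"
proof -
  have f: "finite VG" "finite VH" using assms unfolding simple_graph_def by auto
  have "neighbors VG EG w \<subseteq> VG" unfolding neighbors_def by auto
  hence "finite (neighbors VG EG w)" "neighbors VG EG w \<inter> VH = {}" using f assms(3) by (auto intro: finite_subset)
  thus ?thesis unfolding degree_in_def nbG[OF assms] using f by (simp add: card_Un_disjoint)
qed

lemma degH:
  assumes "simple_graph VG EG" and "simple_graph VH EH"
    and "VG \<inter> VH = {}" and "w \<in> VH"
  shows "degree_in (VG \<union> VH) (join_edges VG EG VH EH) w = degree_in VH EH w + card VG"
proof -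
  have f: "finite VG" "finite VH" using assms unfolding simple_graph_def by auto
  have "neighbors VH EH w \<subseteq> VH" unfolding neighbors_def by auto
  hence "finite (neighbors VH EH w)" "neighbors VH EH w \<inter> VG = {}" using f assms(3) by (auto intro: finite_subset)
  thus ?thesis unfolding degree_in_def nbH[OF assms] using f by (simp add: card_Un_disjoint)
qed

theorem theorem4p14:
  fixes VG VH :: "'a set" and EG EH :: "'a \<Rightarrow> 'a \<Rightarrow> bool" and u :: 'a
  assumes "simple_graph VG EG" and "simple_graph VH EH"
    and "VG \<inter> VH = {}" and "u \<in> VG"
  shows "dp_vertex (VG \<union> VH) (join_edges VG EG VH EH) u
           = monom 1 (card VH) * dp_vertex VG EG u + monom 1 (card VG) * dp_graph VH EH"
proof -
  let ?J = "join_edges VG EG VH EH"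
  have f: "finite VG" "finite VH" using assms unfolding simple_graph_def by auto
  have sub: "neighbors VG EG u \<subseteq> VG" unfolding neighbors_def by auto
  hence fn: "finite (neighbors VG EG u)" and dj: "neighbors VG EG u \<inter> VH = {}"
    using f assms(3) by (auto intro: finite_subset)
  have "dp_vertex (VG \<union> VH) ?J u = (\<Sum>w\<in>neighbors VG EG u \<union> VH. monom 1 (degree_in (VG \<union> VH) ?J w))"
    unfolding dp_vertex_def nbG[OF assms] ..
  also have "\<dots> = (\<Sum>w\<in>neighbors VG EG u. monom 1 (degree_in (VG \<union> VH) ?J w))
       + (\<Sum>w\<in>VH. monom 1 (degree_in (VG \<union> VH) ?J w))"
    using fn f dj by (simp add: sum.union_disjoint)
  also have "(\<Sum>w\<in>neighbors VG EG u. monom 1 (degree_in (VG \<union> VH) ?J w))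
     = (\<Sum>w\<in>neighbors VG EG u. monom 1 (card VH) * monom (1::int) (degree_in VG EG w))"
    by (rule sum.cong) (use sub degG[OF assms(1-3)] in \<open>auto simp: mult_monom add.commute\<close>)
  also have "(\<Sum>w\<in>VH. monom 1 (degree_in (VG \<union> VH) ?J w))
     = (\<Sum>w\<in>VH. monom 1 (card VG) * monom (1::int) (degree_in VH EH w))"
    by (rule sum.cong) (use degH[OF assms(1-3)] in \<open>auto simp: mult_monom add.commute\<close>)
  finally show ?thesis unfolding dp_vertex_def dp_graph_def by (simp add: sum_distrib_left)
qed

end
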